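(* Let $X$ be a shift space over $\mathcal{A}$, $\sigma:\mathcal{A}^*\to\mathcal{B}^*$ an injective and strongly left proper morphism with first letter $\ell$, $Y$ the image of $X$ under $\sigma$ and $v\in\mathcal{L}(X)$. A word $u$ is a bispecial extended image of $v$ if and only if there exist $(a_1,b_1),(a_2,b_2)\in E_X(v)$ with $a_1\ne a_2$, $b_1\ne b_2$ and $u=s(a_1,a_2)\,\sigma(v)\,p(b_1,b_2)$. In particular, the antecedent $v$ of a bispecial word $u\in\mathcal{L}(Y)$ is bispecial in $X$.
   Context: A shift space over a finite alphabet $\mathcal{A}$ is a closed shift-invariant $X\subseteq\mathcal{A}^{\mathbb{Z}}$ in which all letters occur; $\mathcal{L}(X)$ is its set of finite factors. For $w\in\mathcal{L}(X)$: $E^-_X(w)=\{a: aw\in\mathcal{L}(X)\}$, $E^+_X(w)=\{b:wb\in\mathcal{L}(X)\}$, $E_X(w)=\{(a,b):awb\in\mathcal{L}(X)\}$; $w$ is bispecial if $\#E^-_X(w)\ge2$ and $\#E^+_X(w)\ge2$. Morphisms are non-erasing; $\sigma$ is strongly left proper with first letter $\ell$ if every $\sigma(a)$ starts with $\ell$ and contains exactly one occurrence of $\ell$. The image of $X$ under $\sigma$ is $Y=\{S^k\sigma(x):x\in X,0\le k<|\sigma(x_0)|\}$. For $a_1,a_2\in\mathcal{A}$, $s(a_1,a_2)$ (resp. $p(a_1,a_2)$) is the longest common suffix (resp. prefix) of $\sigma(a_1)$ and $\sigma(a_2)$. Fact (antecedents): for every non-empty $u\in\mathcal{L}(Y)$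 containing $\ell$ there is a unique triple $(s,v,p)$ with $v\in\mathcal{L}(X)$, $u=s\sigma(v)p$, such that for some $(a,b)\in E_X(v)$, $s$ is a proper suffix of $\sigma(a)$ and $p$ is a non-empty prefix of $\sigma(b)$. Then $v$ is called the antecedent of $u$ and $u$ an extended image of $v$ (extended images always contain $\ell$). *)

theory Defs
  imports Main "HOL-Library.Sublist"
begin

text \<open>Bi-infinite sequences over an alphabet are functions int => 'a.
  The finite alphabet A is the finite type 'a.\<close>

definition shift :: "(int \<Rightarrow> 'a) \<Rightarrow> (int \<Rightarrow> 'a)" where
  "shift x = (\<lambda>i. x (i + 1))"

definition factor :: "(int \<Rightarrow> 'a) \<Rightarrow> int \<Rightarrow> nat \<Rightarrow> 'a list" where
  "factor x i n = map (\<lambda>k. x (i + int k)) [0..<n]"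

definition lang :: "(int \<Rightarrow> 'a) set \<Rightarrow> 'a list set" where
  "lang X = {w. \<exists>x\<in>X. \<exists>i n. w = factor x i n}"

text \<open>Closedness in the product topology of the discrete alphabet: a sequence
  all of whose factors are factors of X belongs to X.\<close>
definition shift_space :: "(int \<Rightarrow> 'a::finite) set \<Rightarrow> bool" where
  "shift_space X \<longleftrightarrow>
     (\<forall>x. (\<forall>i n. factor x i n \<in> lang X) \<longrightarrow> x \<in> X) \<and>
     shift ` X = X \<and>
     (\<forall>a. \<exists>x\<in>X. \<exists>i. x i = a)"

definition ext_left :: "(int \<Rightarrow> 'a) set \<Rightarrow> 'a list \<Rightarrow> 'a set" where
  "ext_left X w = {a. a # w \<in> lang X}"

definition ext_right :: "(int \<Rightarrow> 'a) set \<Rightarrow> 'a list \<Rightarrow> 'a set" where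
  "ext_right X w = {b. w @ [b] \<in> lang X}"

definition ext_both :: "(int \<Rightarrow> 'a) set \<Rightarrow> 'a list \<Rightarrow> ('a \<times> 'a) set" where
  "ext_both X w = {(a, b). a # w @ [b] \<in> lang X}"

definition bispecial :: "(int \<Rightarrow> 'a) set \<Rightarrow> 'a list \<Rightarrow> bool" where
  "bispecial X w \<longleftrightarrow> w \<in> lang X \<and> 2 \<le> card (ext_left X w) \<and> 2 \<le> card (ext_right X w)"

definition morph :: "('a \<Rightarrow> 'b list) \<Rightarrow> 'a list \<Rightarrow> 'b list" where
  "morph \<sigma> w = concat (map \<sigma> w)"

definition strongly_left_proper :: "('a \<Rightarrow> 'b list) \<Rightarrow> 'b \<Rightarrow> bool" where
  "strongly_left_proper \<sigma> l \<longleftrightarrow>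
     (\<forall>a. \<sigma> a \<noteq> [] \<and> hd (\<sigma> a) = l \<and> count_list (\<sigma> a) l = 1)"

text \<open>Image of X under sigma: all S^k sigma(x), x in X, 0 <= k < |sigma(x_0)|.
  The cut points c n mark where sigma(x_n) starts inside S^k sigma(x); c 0 = -k.\<close>
definition image_shift :: "('a \<Rightarrow> 'b list) \<Rightarrow> (int \<Rightarrow> 'a) set \<Rightarrow> (int \<Rightarrow> 'b) set" where
  "image_shift \<sigma> X = {y. \<exists>x\<in>X. \<exists>c :: int \<Rightarrow> int.
      - int (length (\<sigma> (x 0))) < c 0 \<and> c 0 \<le> 0 \<and>
      (\<forall>n. c (n + 1) = c n + int (length (\<sigma> (x n)))) \<and>
      (\<forall>n j. j < length (\<sigma> (x n)) \<longrightarrow> y (c n + int j) = \<sigma> (x n) ! j)}"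

fun lcp :: "'a list \<Rightarrow> 'a list \<Rightarrow> 'a list" where
  "lcp (x # xs) (y # ys) = (if x = y then x # lcp xs ys else [])"
| "lcp _ _ = []"

definition lcs :: "'a list \<Rightarrow> 'a list \<Rightarrow> 'a list" where
  "lcs xs ys = rev (lcp (rev xs) (rev ys))"

definition sfx :: "('a \<Rightarrow> 'b list) \<Rightarrow> 'a \<Rightarrow> 'a \<Rightarrow> 'b list" where
  "sfx \<sigma> a1 a2 = lcs (\<sigma> a1) (\<sigma> a2)"

definition pfx :: "('a \<Rightarrow> 'b list) \<Rightarrow> 'a \<Rightarrow> 'a \<Rightarrow> 'b list" where
  "pfx \<sigma> a1 a2 = lcp (\<sigma> a1) (\<sigma> a2)"

definition extended_image ::
  "('a \<Rightarrow> 'b list) \<Rightarrow> (int \<Rightarrow> 'a) set \<Rightarrow> 'b list \<Rightarrow> 'a list \<Rightarrow> bool" where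
  "extended_image \<sigma> X u v \<longleftrightarrow> v \<in> lang X \<and>
     (\<exists>s p a b. (a, b) \<in> ext_both X v \<and> strict_suffix s (\<sigma> a) \<and>
        p \<noteq> [] \<and> prefix p (\<sigma> b) \<and> u = s @ morph \<sigma> v @ p)"

end

theory Submission
  imports Defs
begin

lemma lcp_unique: "xs = q @ xs' \<Longrightarrow> ys = q @ ys' \<Longrightarrow> (xs' = [] \<or> ys' = [] \<or> hd xs' \<noteq> hd ys') \<Longrightarrow> lcp xs ys = q"
proof (induction q arbitrary: xs ys)
  case Nil
  then show ?case by (cases xs'; cases ys'; auto)
next
  case (Cons a q)
  then show ?case by auto
qed

lemma lcp_split: "\<exists>xs' ys'. xs = lcp xs ys @ xs' \<and> ys = lcp xs ys @ ys' \<and> (xs' = [] \<or> ys' = [] \<or> hd xs' \<noteq> hd ys')"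
  by (induction xs ys rule: lcp.induct) auto

definition occ :: "(int \<Rightarrow> 'b) \<Rightarrow> int \<Rightarrow> 'b list \<Rightarrow> bool" where
  "occ y t w \<longleftrightarrow> (\<forall>k<length w. y (t + int k) = w ! k)"

lemma factor_len[simp]: "length (factor y t n) = n" by (simp add: factor_def)
lemma factor_nth[simp]: "k < n \<Longrightarrow> factor y t n ! k = y (t + int k)" by (simp add: factor_def)

lemma factor_occ: "factor y t (length w) = w \<longleftrightarrow> occ y t w"
proof
  assume h: "factor y t (length w) = w"
  show "occ y t w" unfolding occ_def
  proof (intro allI impI)
    fix k assume "k < length w"
    then show "y (t + int k) = w ! k" using factor_nth[of k "length w" y t] h by simp
  qed
next
  assume "occ y t w"
  then show "factor y t (length w) = w" by (intro nth_equalityI) (simp_all add: occ_def)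
qed

lemma lang_iff: "w \<in> lang Y \<longleftrightarrow> (\<exists>y\<in>Y. \<exists>t. occ y t w)"
proof
  assume "w \<in> lang Y"
  then obtain y i n where "y \<in> Y" "w = factor y i n" unfolding lang_def by blast
  moreover have "length (factor y i n) = n" by (simp add: factor_def)
  ultimately show "\<exists>y\<in>Y. \<exists>t. occ y t w" using factor_occ by metis
next
  assume "\<exists>y\<in>Y. \<exists>t. occ y t w"
  then obtain y t where "y \<in> Y" "occ y t w" by blast
  then have "w = factor y t (length w)" using factor_occ[of y t w] by simp
  then show "w \<in> lang Y" unfolding lang_def using \<open>y \<in> Y\<close> by blast
qed

lemma occ_append: "occ y t (A @ B) \<longleftrightarrow> occ y t A \<and> occ y (t + int (length A)) B"
  unfolding occ_def
proof safe
  fix k assume h: "\<forall>k<length (A @ B). y (t + int k) = (A @ B) ! k" "k < length B"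
  then show "y (t + int (length A) + int k) = B ! k"
    using h(1)[rule_format, of "length A + k"] by (simp add: nth_append add.assoc)
next
  fix k assume h: "\<forall>k<length A. y (t + int k) = A ! k" "\<forall>k<length B. y (t + int (length A) + int k) = B ! k"
    "k < length (A @ B)"
  show "y (t + int k) = (A @ B) ! k"
  proof (cases "k < length A")
    case True then show ?thesis using h by (simp add: nth_append)
  next
    case False
    then show ?thesis using h(2)[rule_format, of "k - length A"] h(3) by (simp add: nth_append add.assoc)
  qed
qed (simp_all add: nth_append)

lemma occ_Cons: "occ y t (a # B) \<longleftrightarrow> y t = a \<and> occ y (t + 1) B"
  using occ_append[of y t "[a]" B] by (simp add: occ_def)

lemma lang_infix: "A @ B @ C \<in> lang Y \<Longrightarrow> B \<in> lang Y"
  unfolding lang_iff occ_append by blast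

lemma factor_lang: "x \<in> X \<Longrightarrow> factor x i n \<in> lang X"
  unfolding lang_def by blast

lemma factor_add: "factor x i (m + n) = factor x i m @ factor x (i + int m) n"
  unfolding factor_def by (induction n) (auto simp: add.assoc)

lemma factor_Suc: "factor x i (Suc n) = x i # factor x (i + 1) n"
  using factor_add[of x i 1 n] by (simp add: factor_def)

lemma factor_Suc2: "factor x i (Suc n) = factor x i n @ [x (i + int n)]"
  using factor_add[of x i n 1] by (simp add: factor_def)

lemma morph_simps[simp]: "morph \<sigma> [] = []" "morph \<sigma> (a # w) = \<sigma> a @ morph \<sigma> w"
  "morph \<sigma> (w1 @ w2) = morph \<sigma> w1 @ morph \<sigma> w2"
  by (auto simp: morph_def)

lemma inj_letters: "inj (morph \<sigma>) \<Longrightarrow> \<sigma> a = \<sigma> b \<Longrightarrow> a = b"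
  using injD[of "morph \<sigma>" "[a]" "[b]"] by simp

lemma slp_ne: "strongly_left_proper \<sigma> l \<Longrightarrow> \<sigma> a \<noteq> []"
  unfolding strongly_left_proper_def by auto

lemma slp_0: "strongly_left_proper \<sigma> l \<Longrightarrow> \<sigma> a ! 0 = l"
  unfolding strongly_left_proper_def by (metis hd_conv_nth)

lemma count1: "xs \<noteq> [] \<Longrightarrow> hd xs = l \<Longrightarrow> count_list xs l = 1 \<Longrightarrow> l \<notin> set (tl xs)"
  by (cases xs) (auto simp: count_list_0_iff)

lemma slp_nl: "strongly_left_proper \<sigma> l \<Longrightarrow> k < length (\<sigma> a) \<Longrightarrow> k \<noteq> 0 \<Longrightarrow> \<sigma> a ! k \<noteq> l"
proof -
  assume h: "strongly_left_proper \<sigma> l" "k < length (\<sigma> a)" "k \<noteq> 0"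
  then have "l \<notin> set (tl (\<sigma> a))" using count1 unfolding strongly_left_proper_def by metis
  moreover have "\<sigma> a ! k = tl (\<sigma> a) ! (k - 1)" using h by (cases "\<sigma> a") auto
  moreover have "k - 1 < length (tl (\<sigma> a))" using h by auto
  ultimately show ?thesis by (metis nth_mem)
qed


lemma inc_ge: fixes c :: "int \<Rightarrow> int" assumes "\<And>n. c n < c (n+1)" shows "c n + int k \<le> c (n + int k)"
proof (induction k)
  case (Suc k)
  have "c (n + int k) < c (n + int k + 1)" by (rule assms)
  then show ?case using Suc by (simp add: algebra_simps)
qed simp

lemma inc_mono: fixes c :: "int \<Rightarrow> int" assumes "\<And>n. c n < c (n+1)" "n < m" shows "c (n+1) \<le> c m"
  using inc_ge[of c "n+1" "nat (m - n - 1)", OF assms(1)] assms(2) by simp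

lemma block_uniq: fixes c :: "int \<Rightarrow> int" assumes "\<And>n. c n < c (n+1)" "c n \<le> t" "t < c (n+1)" "c m \<le> t" "t < c (m+1)"
  shows "n = m"
proof (rule ccontr)
  assume "n \<noteq> m"
  then have "n < m \<or> m < n" by auto
  then show False using inc_mono[of c, OF assms(1)] assms(2-5) by fastforce
qed

lemma block_ex: fixes c :: "int \<Rightarrow> int" assumes "\<And>n. c n < c (n+1)" shows "\<exists>n. c n \<le> t \<and> t < c (n+1)"
proof -
  have up: "\<exists>n. c n \<le> c 0 + int k \<and> c 0 + int k < c (n+1)" for k
  proof (induction k)
    case 0 then show ?case using assms[of 0] by auto
  next
    case (Suc k)
    then obtain n where n: "c n \<le> c 0 + int k" "c 0 + int k < c (n+1)" by blast
    show ?case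
    proof (cases "c 0 + int (Suc k) < c (n+1)")
      case True then show ?thesis using n by (intro exI[of _ n]) auto
    next
      case False
      then have "c 0 + int (Suc k) = c (n+1)" using n by auto
      then show ?thesis using assms[of "n+1"] by auto
    qed
  qed
  have down: "\<exists>n. c n \<le> c 0 - int k \<and> c 0 - int k < c (n+1)" for k
  proof (induction k)
    case 0 then show ?case using assms[of 0] by auto
  next
    case (Suc k)
    then obtain n where n: "c n \<le> c 0 - int k" "c 0 - int k < c (n+1)" by blast
    show ?case
    proof (cases "c n \<le> c 0 - int (Suc k)")
      case True then show ?thesis using n by auto
    next
      case False
      then have "c 0 - int k = c n" using n by auto
      then show ?thesis using assms[of "n-1"] by (intro exI[of _ "n-1"]) auto
    qed
  qed
  show ?thesis
  proof (cases "t \<ge> c 0")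
    case True then show ?thesis using up[of "nat (t - c 0)"] by auto
  next
    case False then show ?thesis using down[of "nat (c 0 - t)"] by auto
  qed
qed

definition cutp :: "('a \<Rightarrow> 'b list) \<Rightarrow> (int \<Rightarrow> 'a) \<Rightarrow> (int \<Rightarrow> int) \<Rightarrow> (int \<Rightarrow> 'b) \<Rightarrow> bool" where
  "cutp \<sigma> x c y \<longleftrightarrow> (\<forall>n. c (n+1) = c n + int (length (\<sigma> (x n)))) \<and>
     (\<forall>n j. j < length (\<sigma> (x n)) \<longrightarrow> y (c n + int j) = \<sigma> (x n) ! j)"

lemma cutp_inc: "strongly_left_proper \<sigma> l \<Longrightarrow> cutp \<sigma> x c y \<Longrightarrow> c n < c (n+1)"
  unfolding cutp_def using slp_ne[of \<sigma> l "x n"] by auto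

lemma cutp_y: "cutp \<sigma> x c y \<Longrightarrow> j < length (\<sigma> (x n)) \<Longrightarrow> y (c n + int j) = \<sigma> (x n) ! j"
  unfolding cutp_def by auto

lemma cutp_c: "cutp \<sigma> x c y \<Longrightarrow> c (n+1) = c n + int (length (\<sigma> (x n)))"
  unfolding cutp_def by auto

lemma cutp_l: assumes "strongly_left_proper \<sigma> l" "cutp \<sigma> x c y" "y t = l" shows "\<exists>n. t = c n"
proof -
  obtain n where n: "c n \<le> t" "t < c (n+1)" using block_ex[of c t] cutp_inc[OF assms(1,2)] by blast
  define j where "j = nat (t - c n)"
  have j: "t = c n + int j" "j < length (\<sigma> (x n))" using n cutp_c[OF assms(2), of n] unfolding j_def by auto
  then have "\<sigma> (x n) ! j = l" using cutp_y[OF assms(2) j(2)] assms(3) by simp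
  then have "j = 0" using slp_nl[OF assms(1) j(2)] by auto
  then show ?thesis using j by auto
qed

lemma cutp_l0: "strongly_left_proper \<sigma> l \<Longrightarrow> cutp \<sigma> x c y \<Longrightarrow> y (c n) = l"
  using cutp_y[of \<sigma> x c y 0 n] slp_ne[of \<sigma> l] slp_0[of \<sigma> l] by auto

lemma cutp_occ: "cutp \<sigma> x c y \<Longrightarrow> occ y (c n) (\<sigma> (x n))"
  unfolding occ_def using cutp_y by blast

lemma cutp_occ_morph: "cutp \<sigma> x c y \<Longrightarrow> occ y (c n) (morph \<sigma> (factor x n m))"
proof (induction m arbitrary: n)
  case 0 then show ?case by (simp add: occ_def factor_def)
next
  case (Suc m)
  show ?case unfolding factor_Suc morph_simps occ_append
    using cutp_occ[OF Suc.prems, of n] Suc.IH[OF Suc.prems, of "n+1"] cutp_c[OF Suc.prems, of n] by simp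
qed


lemma cutp_exists:
  assumes slp: "strongly_left_proper \<sigma> l"
  shows "\<exists>c y. c 0 = 0 \<and> cutp \<sigma> x c y"
proof -
  let ?len = "\<lambda>k. int (length (\<sigma> (x k)))"
  define c where "c n = (if 0 \<le> n then (\<Sum>k\<in>{0..<n}. ?len k) else - (\<Sum>k\<in>{n..<0}. ?len k))" for n
  have cs: "c (n+1) = c n + ?len n" for n
  proof -
    consider "0 \<le> n" | "n = -1" | "n < -1" by linarith
    then show ?thesis
    proof cases
      case 1
      have "{0..<n+1} = insert n {0..<n}" using 1 by auto
      then show ?thesis using 1 unfolding c_def by simp
    next
      case 2
      have "{-1..<0::int} = {-1}" by auto
      then show ?thesis using 2 unfolding c_def by simp
    next
      case 3
      have "{n..<0} = insert n {n+1..<0}" using 3 by auto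
      then show ?thesis using 3 unfolding c_def by simp
    qed
  qed
  have inc: "c n < c (n+1)" for n using cs[of n] slp_ne[OF slp, of "x n"] by simp
  define blk where "blk t = (SOME n. c n \<le> t \<and> t < c (n+1))" for t
  define y where "y t = \<sigma> (x (blk t)) ! nat (t - c (blk t))" for t
  have "y (c n + int j) = \<sigma> (x n) ! j" if j: "j < length (\<sigma> (x n))" for n j
  proof -
    have b: "c n \<le> c n + int j \<and> c n + int j < c (n+1)" using j cs[of n] by simp
    then have "c (blk (c n + int j)) \<le> c n + int j \<and> c n + int j < c (blk (c n + int j) + 1)"
      unfolding blk_def by (rule someI)
    then have "blk (c n + int j) = n" using block_uniq[of c, OF inc] b by blast
    then show ?thesis unfolding y_def by simp
  qed
  moreover have "c 0 = 0" unfolding c_def by simp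
  ultimately show ?thesis unfolding cutp_def using cs by blast
qed

lemma image_shiftI: "strongly_left_proper \<sigma> l \<Longrightarrow> x \<in> X \<Longrightarrow> c 0 = 0 \<Longrightarrow> cutp \<sigma> x c y \<Longrightarrow> y \<in> image_shift \<sigma> X"
  unfolding image_shift_def cutp_def using slp_ne[of \<sigma> l "x 0"]
  apply clarsimp apply (rule bexI[of _ x]) apply (rule exI[of _ c]) by auto

lemma image_shiftD: "y \<in> image_shift \<sigma> X \<Longrightarrow> \<exists>x\<in>X. \<exists>c. cutp \<sigma> x c y"
  unfolding image_shift_def cutp_def by blast

lemma morph_lang: assumes "strongly_left_proper \<sigma> l" "w \<in> lang X"
  shows "morph \<sigma> w \<in> lang (image_shift \<sigma> X)"
proof -
  obtain x i n where x: "x \<in> X" "w = factor x i n" using assms(2) unfolding lang_def by blast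
  obtain c y where cy: "c 0 = 0" "cutp \<sigma> x c y" using cutp_exists[OF assms(1)] by blast
  show ?thesis unfolding lang_iff using image_shiftI[OF assms(1) x(1) cy] cutp_occ_morph[OF cy(2)] x(2) by blast
qed


lemma occ_nth: "occ y t w \<Longrightarrow> k < length w \<Longrightarrow> y (t + int k) = w ! k"
  unfolding occ_def by blast

lemma hd_morph_p: "strongly_left_proper \<sigma> l \<Longrightarrow> p \<noteq> [] \<Longrightarrow> hd p = l \<Longrightarrow> (morph \<sigma> v @ p) ! 0 = l"
  by (cases v) (auto simp: nth_append slp_0 slp_ne hd_conv_nth)

lemma parse_v:
  assumes slp: "strongly_left_proper \<sigma> l" and inj: "inj (morph \<sigma>)" and cp: "cutp \<sigma> x c y"
    and p: "p \<noteq> []" "hd p = l"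
  shows "occ y (c n) (morph \<sigma> v @ p) \<Longrightarrow> factor x n (length v) = v \<and> c (n + int (length v)) = c n + int (length (morph \<sigma> v))"
proof (induction v arbitrary: n)
  case Nil then show ?case by (simp add: factor_def)
next
  case (Cons a v)
  let ?w = "morph \<sigma> v @ p"
  have o: "occ y (c n) (\<sigma> a @ ?w)" using Cons.prems by simp
  have w0: "?w ! 0 = l" "?w \<noteq> []" using hd_morph_p[OF slp p] p by auto
  have eqlen: "length (\<sigma> a) = length (\<sigma> (x n))"
  proof (rule ccontr)
    assume ne: "length (\<sigma> a) \<noteq> length (\<sigma> (x n))"
    then consider "length (\<sigma> a) < length (\<sigma> (x n))" | "length (\<sigma> (x n)) < length (\<sigma> a)" by linarith
    then show False
    proof cases
      case 1
      have "y (c n + int (length (\<sigma> a))) = (\<sigma> a @ ?w) ! length (\<sigma> a)"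
        using occ_nth[OF o, of "length (\<sigma> a)"] w0 by simp
      also have "\<dots> = l" using w0 by (simp add: nth_append del: append_assoc)
      finally show False using cutp_y[OF cp 1] slp_nl[OF slp 1] slp_ne[OF slp, of a] by simp
    next
      case 2
      have "y (c n + int (length (\<sigma> (x n)))) = (\<sigma> a @ ?w) ! length (\<sigma> (x n))"
        using occ_nth[OF o, of "length (\<sigma> (x n))"] 2 by simp
      also have "\<dots> = \<sigma> a ! length (\<sigma> (x n))" using 2 by (simp add: nth_append)
      finally show False using cutp_l0[OF slp cp, of "n+1"] cutp_c[OF cp, of n] slp_nl[OF slp 2] slp_ne[OF slp, of "x n"] by simp
    qed
  qed
  have "\<sigma> a = \<sigma> (x n)"
  proof (rule nth_equalityI)
    fix j assume j: "j < length (\<sigma> a)"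
    have "y (c n + int j) = (\<sigma> a @ ?w) ! j" using occ_nth[OF o, of j] j by simp
    then show "\<sigma> a ! j = \<sigma> (x n) ! j" using cutp_y[OF cp, of j n] j eqlen by (simp add: nth_append)
  qed (rule eqlen)
  then have xa: "x n = a" using inj_letters[OF inj] by metis
  have "occ y (c (n+1)) ?w" using o unfolding occ_append using cutp_c[OF cp, of n] eqlen by simp
  from Cons.IH[OF this] have ih: "factor x (n + 1) (length v) = v" "c (n + 1 + int (length v)) = c (n + 1) + int (length (morph \<sigma> v))" by auto
  have f1: "factor x n (length (a # v)) = a # v" using factor_Suc[of x n "length v"] ih(1) xa by simp
  have e1: "n + int (length (a # v)) = n + 1 + int (length v)" by simp
  have "c (n + int (length (a # v))) = c n + int (length (morph \<sigma> (a # v)))"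
    unfolding e1 ih(2) cutp_c[OF cp, of n] using eqlen by simp
  then show ?case using f1 by blast
qed


lemma s_nol: assumes "strongly_left_proper \<sigma> l" "strict_suffix s (\<sigma> a)" shows "l \<notin> set s"
proof -
  obtain z where z: "\<sigma> a = z @ s" "z \<noteq> []" using assms(2) unfolding strict_suffix_def suffix_def by auto
  have "count_list (\<sigma> a) l = 1" "hd (\<sigma> a) = l" using assms(1) unfolding strongly_left_proper_def by auto
  then have "count_list z l + count_list s l = 1" "hd z = l" using z by auto
  moreover have "count_list z l \<ge> 1" using z(2) \<open>hd z = l\<close> by (cases z) auto
  ultimately have "count_list s l = 0" by linarith
  then show ?thesis by (simp add: count_list_0_iff)
qed

lemma p_nl: assumes "strongly_left_proper \<sigma> l" "prefix p (\<sigma> b)" "k < length p" "k \<noteq> 0" shows "p ! k \<noteq> l"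
proof -
  obtain r where r: "\<sigma> b = p @ r" using assms(2) unfolding prefix_def by auto
  have "\<sigma> b ! k = p ! k" using r assms(3) by (simp add: nth_append)
  then show ?thesis using slp_nl[OF assms(1), of k b] r assms(3,4) by auto
qed

lemma p_hd: assumes "strongly_left_proper \<sigma> l" "prefix p (\<sigma> b)" "p \<noteq> []" shows "hd p = l"
  using assms unfolding strongly_left_proper_def prefix_def by (metis hd_append2)

definition Lt :: "('a \<Rightarrow> 'b list) \<Rightarrow> 'b list \<Rightarrow> 'a \<Rightarrow> 'b" where
  "Lt \<sigma> s a = \<sigma> a ! (length (\<sigma> a) - length s - 1)"

definition Rt :: "('a \<Rightarrow> 'b list) \<Rightarrow> 'b \<Rightarrow> 'b list \<Rightarrow> 'a \<Rightarrow> 'b" where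
  "Rt \<sigma> l p b = (if length p < length (\<sigma> b) then \<sigma> b ! length p else l)"

lemma parse:
  assumes slp: "strongly_left_proper \<sigma> l" and inj: "inj (morph \<sigma>)" and cp: "cutp \<sigma> x c y"
    and sa: "strict_suffix s (\<sigma> a0)" and p: "p \<noteq> []" "prefix p (\<sigma> b0)"
    and o: "occ y t (s @ morph \<sigma> v @ p)"
  shows "\<exists>n. factor x (n - 1) (Suc (Suc (length v))) = x (n - 1) # v @ [x (n + int (length v))] \<and>
    strict_suffix s (\<sigma> (x (n - 1))) \<and> prefix p (\<sigma> (x (n + int (length v)))) \<and>
    y (t - 1) = Lt \<sigma> s (x (n - 1)) \<and>
    y (t + int (length (s @ morph \<sigma> v @ p))) = Rt \<sigma> l p (x (n + int (length v)))"
proof -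
  have hp: "hd p = l" using p_hd[OF slp p(2) p(1)] .
  have snol: "l \<notin> set s" using s_nol[OF slp sa] .
  have o1: "occ y t s" and o2: "occ y (t + int (length s)) (morph \<sigma> v @ p)" using o unfolding occ_append by auto
  have "y (t + int (length s)) = l" using occ_nth[OF o2, of 0] hd_morph_p[OF slp p(1) hp] p(1) by simp
  then obtain n where n: "t + int (length s) = c n" using cutp_l[OF slp cp] by metis
  have pv: "factor x n (length v) = v" "c (n + int (length v)) = c n + int (length (morph \<sigma> v))"
    using parse_v[OF slp inj cp p(1) hp, of n v] o2 n by auto
  define m where "m = n + int (length v)"
  have op: "occ y (c m) p" using o2 unfolding occ_append n m_def using pv by simp
  have lp: "length p \<le> length (\<sigma> (x m))"
  proof (rule ccontr)
    assume "\<not> ?thesis"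
    then have lt: "length (\<sigma> (x m)) < length p" by simp
    have "y (c m + int (length (\<sigma> (x m)))) = p ! length (\<sigma> (x m))" using occ_nth[OF op lt] .
    moreover have "y (c m + int (length (\<sigma> (x m)))) = l" using cutp_l0[OF slp cp, of "m+1"] cutp_c[OF cp, of m] by simp
    ultimately show False using p_nl[OF slp p(2) lt] slp_ne[OF slp, of "x m"] by simp
  qed
  have "p = take (length p) (\<sigma> (x m))"
  proof (rule nth_equalityI)
    fix k assume k: "k < length p"
    show "p ! k = take (length p) (\<sigma> (x m)) ! k"
      using occ_nth[OF op k] cutp_y[OF cp, of k m] k lp by simp
  qed (use lp in simp)
  then have pre: "prefix p (\<sigma> (x m))" by (metis take_is_prefix)
  define N where "N = n - 1"
  have nN: "n = N + 1" unfolding N_def by simp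
  have cN: "c n = c N + int (length (\<sigma> (x N)))" using cutp_c[OF cp, of N] nN by simp
  have ls: "length s < length (\<sigma> (x N))"
  proof (rule ccontr)
    assume nls: "\<not> ?thesis"
    define k where "k = nat (c N - t)"
    have hL: "length (\<sigma> (x N)) \<ge> 1" using slp_ne[OF slp, of "x N"] by (cases "\<sigma> (x N)") auto
    have k: "k < length s" "t + int k = c N" using cN n nls hL unfolding k_def by arith+
    have "y (c N) = s ! k" using occ_nth[OF o1 k(1)] k(2) by simp
    then show False using cutp_l0[OF slp cp, of N] snol k(1) by (metis nth_mem)
  qed
  have "s = drop (length (\<sigma> (x N)) - length s) (\<sigma> (x N))"
  proof (rule nth_equalityI)
    fix k assume k: "k < length s"
    have e: "t + int k = c N + int (length (\<sigma> (x N)) - length s + k)" using cN n ls by simp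
    have "s ! k = y (t + int k)" using occ_nth[OF o1 k] by simp
    also have "\<dots> = y (c N + int (length (\<sigma> (x N)) - length s + k))" using e by (simp only:)
    also have "\<dots> = \<sigma> (x N) ! (length (\<sigma> (x N)) - length s + k)" by (rule cutp_y[OF cp]) (use k ls in simp)
    also have "\<dots> = drop (length (\<sigma> (x N)) - length s) (\<sigma> (x N)) ! k" using ls by simp
    finally show "s ! k = drop (length (\<sigma> (x N)) - length s) (\<sigma> (x N)) ! k" .
  qed (use ls in simp)
  then have ss: "strict_suffix s (\<sigma> (x N))" unfolding strict_suffix_def using ls
    by (metis less_irrefl suffix_drop)
  have "t - 1 = c N + int (length (\<sigma> (x N)) - length s - 1)" using cN n ls by simp
  then have "y (t - 1) = \<sigma> (x N) ! (length (\<sigma> (x N)) - length s - 1)"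
    using cutp_y[OF cp, of "length (\<sigma> (x N)) - length s - 1" N] ls by (simp only:)
  then have yl: "y (t - 1) = Lt \<sigma> s (x N)" unfolding Lt_def .
  have tr: "t + int (length (s @ morph \<sigma> v @ p)) = c m + int (length p)" using n pv(2) unfolding m_def by simp
  have yr: "y (c m + int (length p)) = Rt \<sigma> l p (x m)"
  proof (cases "length p < length (\<sigma> (x m))")
    case True then show ?thesis unfolding Rt_def using cutp_y[OF cp True] by simp
  next
    case False
    then have "length p = length (\<sigma> (x m))" using lp by simp
    then show ?thesis unfolding Rt_def using cutp_l0[OF slp cp, of "m+1"] cutp_c[OF cp, of m] by simp
  qed
  have fx: "factor x N (Suc (Suc (length v))) = x N # v @ [x m]"
    using factor_Suc[of x N "Suc (length v)"] factor_Suc2[of x n "length v"] pv(1) nN m_def by simp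
  show ?thesis apply (rule exI[of _ n]) using fx ss pre yl yr tr unfolding N_def[symmetric] m_def[symmetric] by (simp only:)
qed


lemma card2: "finite S \<Longrightarrow> a \<in> S \<Longrightarrow> b \<in> S \<Longrightarrow> a \<noteq> b \<Longrightarrow> 2 \<le> card S"
  using card_mono[of S "{a, b}"] by auto

lemma card2D: "2 \<le> card S \<Longrightarrow> \<exists>a b. a \<in> S \<and> b \<in> S \<and> a \<noteq> b"
proof -
  assume h: "2 \<le> card S"
  then have "finite S" "S \<noteq> {}" using card.infinite by fastforce+
  then obtain a where a: "a \<in> S" by blast
  have "card (S - {a}) \<ge> 1" using h a \<open>finite S\<close> by simp
  then have "S - {a} \<noteq> {}" by (metis card.empty not_one_le_zero)
  then show ?thesis using a by blast
qed

lemma cross: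
  assumes "e1 \<in> Os" "e2 \<in> Os" "f e1 \<noteq> f e2" "e3 \<in> Os" "e4 \<in> Os" "g e3 \<noteq> g e4"
  shows "\<exists>e\<in>Os. \<exists>e'\<in>Os. f e \<noteq> f e' \<and> g e \<noteq> g e'"
proof (rule ccontr)
  assume "\<not> ?thesis"
  then have H: "\<And>e e'. e \<in> Os \<Longrightarrow> e' \<in> Os \<Longrightarrow> f e = f e' \<or> g e = g e'" by blast
  have g12: "g e1 = g e2" using H[OF assms(1,2)] assms(3) by blast
  show False
  proof (cases "g e3 = g e1")
    case True
    then have "g e4 \<noteq> g e1" "g e4 \<noteq> g e2" using assms(6) g12 by auto
    then show False using H[OF assms(5,1)] H[OF assms(5,2)] assms(3) by auto
  next
    case False
    then have "g e3 \<noteq> g e2" using g12 by auto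
    then show False using False H[OF assms(4,1)] H[OF assms(4,2)] assms(3) by auto
  qed
qed

lemma lcs_eq:
  assumes "strict_suffix s (\<sigma> a1)" "strict_suffix s (\<sigma> a2)" "Lt \<sigma> s a1 \<noteq> Lt \<sigma> s a2"
  shows "sfx \<sigma> a1 a2 = s"
proof -
  obtain z1 where z1: "\<sigma> a1 = z1 @ s" "z1 \<noteq> []" using assms(1) unfolding strict_suffix_def suffix_def by auto
  obtain z2 where z2: "\<sigma> a2 = z2 @ s" "z2 \<noteq> []" using assms(2) unfolding strict_suffix_def suffix_def by auto
  have "Lt \<sigma> s a1 = last z1" unfolding Lt_def z1 using z1(2) by (simp add: nth_append last_conv_nth)
  moreover have "Lt \<sigma> s a2 = last z2" unfolding Lt_def z2 using z2(2) by (simp add: nth_append last_conv_nth)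
  ultimately have "hd (rev z1) \<noteq> hd (rev z2)" using assms(3) by (simp add: hd_rev)
  then have "lcp (rev (\<sigma> a1)) (rev (\<sigma> a2)) = rev s" by (intro lcp_unique[of _ _ "rev z1" _ "rev z2"]) (auto simp: z1 z2)
  then show ?thesis unfolding sfx_def lcs_def by simp
qed

lemma lcp_eq:
  assumes "prefix p (\<sigma> b1)" "prefix p (\<sigma> b2)" "Rt \<sigma> l p b1 \<noteq> Rt \<sigma> l p b2"
  shows "pfx \<sigma> b1 b2 = p"
proof -
  obtain r1 where r1: "\<sigma> b1 = p @ r1" using assms(1) unfolding prefix_def by auto
  obtain r2 where r2: "\<sigma> b2 = p @ r2" using assms(2) unfolding prefix_def by auto
  have "Rt \<sigma> l p b1 = (if r1 = [] then l else hd r1)" unfolding Rt_def r1 by (auto simp: hd_conv_nth nth_append)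
  moreover have "Rt \<sigma> l p b2 = (if r2 = [] then l else hd r2)" unfolding Rt_def r2 by (auto simp: hd_conv_nth nth_append)
  ultimately have "r1 = [] \<or> r2 = [] \<or> hd r1 \<noteq> hd r2" using assms(3) by auto
  then show ?thesis unfolding pfx_def by (intro lcp_unique[OF r1 r2])
qed

lemma suffix_eq: assumes "strongly_left_proper \<sigma> l" "\<sigma> a2 = z @ \<sigma> a1" shows "z = []"
proof (rule ccontr)
  assume "z \<noteq> []"
  have "count_list (\<sigma> a2) l = 1" "hd (\<sigma> a2) = l" "count_list (\<sigma> a1) l = 1" using assms(1) unfolding strongly_left_proper_def by auto
  then have "count_list z l = 0" "hd z = l" using assms(2) \<open>z \<noteq> []\<close> by auto
  then show False using \<open>z \<noteq> []\<close> by (cases z) auto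
qed

lemma ctx_lang:
  assumes slp: "strongly_left_proper \<sigma> l" and e: "(a, b) \<in> ext_both X v"
    and sa: "strict_suffix s (\<sigma> a)" and pb: "prefix p (\<sigma> b)"
  shows "Lt \<sigma> s a # (s @ morph \<sigma> v @ p) \<in> lang (image_shift \<sigma> X)"
    "(s @ morph \<sigma> v @ p) @ [Rt \<sigma> l p b] \<in> lang (image_shift \<sigma> X)"
proof -
  obtain z where z: "\<sigma> a = z @ s" "z \<noteq> []" using sa unfolding strict_suffix_def suffix_def by auto
  obtain r where r: "\<sigma> b = p @ r" using pb unfolding prefix_def by auto
  have w: "a # v @ [b] \<in> lang X" using e unfolding ext_both_def by auto
  have m: "morph \<sigma> (a # v @ [b]) \<in> lang (image_shift \<sigma> X)" by (rule morph_lang[OF slp w])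
  have Lz: "Lt \<sigma> s a = last z" unfolding Lt_def z using z(2) by (simp add: nth_append last_conv_nth)
  have "morph \<sigma> (a # v @ [b]) = butlast z @ (Lt \<sigma> s a # (s @ morph \<sigma> v @ p)) @ r"
    using z r Lz by simp
  then show "Lt \<sigma> s a # (s @ morph \<sigma> v @ p) \<in> lang (image_shift \<sigma> X)" using m lang_infix by metis
  obtain x i n where x: "x \<in> X" "a # v @ [b] = factor x i n" using w unfolding lang_def by blast
  have w2: "a # v @ [b, x (i + int n)] \<in> lang X" using factor_lang[OF x(1), of i "Suc n"] unfolding factor_Suc2 x(2)[symmetric] by simp
  have m2: "morph \<sigma> (a # v @ [b, x (i + int n)]) \<in> lang (image_shift \<sigma> X)" by (rule morph_lang[OF slp w2])
  show "(s @ morph \<sigma> v @ p) @ [Rt \<sigma> l p b] \<in> lang (image_shift \<sigma> X)"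
  proof (cases r)
    case Nil
    have R: "Rt \<sigma> l p b = l" unfolding Rt_def r Nil by simp
    obtain q where q: "\<sigma> (x (i + int n)) = l # q" using slp_ne[OF slp] slp_0[OF slp]
      by (metis list.exhaust nth_Cons_0)
    have "morph \<sigma> (a # v @ [b, x (i + int n)]) = z @ ((s @ morph \<sigma> v @ p) @ [Rt \<sigma> l p b]) @ q"
      using z r Nil q R by simp
    then show ?thesis using m2 lang_infix by metis
  next
    case (Cons d r')
    have R: "Rt \<sigma> l p b = d" unfolding Rt_def r Cons by simp
    have "morph \<sigma> (a # v @ [b]) = z @ ((s @ morph \<sigma> v @ p) @ [Rt \<sigma> l p b]) @ r'"
      using z r Cons R by simp
    then show ?thesis using m lang_infix by metis
  qed
qed


lemma forward:
  assumes slp: "strongly_left_proper \<sigma> l" and inj: "inj (morph \<sigma>)"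
    and bs: "bispecial (image_shift \<sigma> X) u" and ei: "extended_image \<sigma> X u v"
  shows "\<exists>a1 b1 a2 b2. (a1, b1) \<in> ext_both X v \<and> (a2, b2) \<in> ext_both X v \<and>
               a1 \<noteq> a2 \<and> b1 \<noteq> b2 \<and> u = sfx \<sigma> a1 a2 @ morph \<sigma> v @ pfx \<sigma> b1 b2"
proof -
  obtain s p a0 b0 where sp: "(a0, b0) \<in> ext_both X v" "strict_suffix s (\<sigma> a0)" "p \<noteq> []"
    "prefix p (\<sigma> b0)" "u = s @ morph \<sigma> v @ p"
    using ei unfolding extended_image_def by blast
  define Os where "Os = {(a, b). (a, b) \<in> ext_both X v \<and> strict_suffix s (\<sigma> a) \<and> prefix p (\<sigma> b)}"
  let ?f = "\<lambda>e. Lt \<sigma> s (fst e)" and ?g = "\<lambda>e. Rt \<sigma> l p (snd e)"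
  have OL: "\<exists>e\<in>Os. c = ?f e" if "c \<in> ext_left (image_shift \<sigma> X) u" for c
  proof -
    have "c # u \<in> lang (image_shift \<sigma> X)" using that unfolding ext_left_def by simp
    then obtain y t where yt: "y \<in> image_shift \<sigma> X" "occ y t (c # u)"
      unfolding lang_iff by blast
    obtain x cc where x: "x \<in> X" "cutp \<sigma> x cc y" using image_shiftD[OF yt(1)] by blast
    have o: "occ y (t+1) (s @ morph \<sigma> v @ p)" "y t = c" using yt(2) sp(5) unfolding occ_Cons by auto
    obtain n where n: "factor x (n - 1) (Suc (Suc (length v))) = x (n - 1) # v @ [x (n + int (length v))]"
      "strict_suffix s (\<sigma> (x (n - 1)))" "prefix p (\<sigma> (x (n + int (length v))))"
      "y (t + 1 - 1) = Lt \<sigma> s (x (n - 1))"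
      using parse[OF slp inj x(2) sp(2) sp(3) sp(4) o(1)] by blast
    have "(x (n - 1), x (n + int (length v))) \<in> ext_both X v"
      unfolding ext_both_def using factor_lang[OF x(1)] n(1) by (metis (mono_tags, lifting) case_prodI mem_Collect_eq)
    then show ?thesis using n o(2) unfolding Os_def by (intro bexI[of _ "(x (n - 1), x (n + int (length v)))"]) auto
  qed
  have OR: "\<exists>e\<in>Os. d = ?g e" if "d \<in> ext_right (image_shift \<sigma> X) u" for d
  proof -
    have "u @ [d] \<in> lang (image_shift \<sigma> X)" using that unfolding ext_right_def by simp
    then obtain y t where yt: "y \<in> image_shift \<sigma> X" "occ y t (u @ [d])"
      unfolding lang_iff by blast
    obtain x cc where x: "x \<in> X" "cutp \<sigma> x cc y" using image_shiftD[OF yt(1)] by blast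
    have o0: "occ y t u" "occ y (t + int (length u)) [d]" using yt(2) unfolding occ_append by auto
    have o: "occ y t (s @ morph \<sigma> v @ p)" "y (t + int (length (s @ morph \<sigma> v @ p))) = d"
      using o0(1) occ_nth[OF o0(2), of 0] sp(5) by simp_all
    obtain n where n: "factor x (n - 1) (Suc (Suc (length v))) = x (n - 1) # v @ [x (n + int (length v))]"
      "strict_suffix s (\<sigma> (x (n - 1)))" "prefix p (\<sigma> (x (n + int (length v))))"
      "y (t + int (length (s @ morph \<sigma> v @ p))) = Rt \<sigma> l p (x (n + int (length v)))"
      using parse[OF slp inj x(2) sp(2) sp(3) sp(4) o(1)] by blast
    have "(x (n - 1), x (n + int (length v))) \<in> ext_both X v"
      unfolding ext_both_def using factor_lang[OF x(1)] n(1) by (metis (mono_tags, lifting) case_prodI mem_Collect_eq)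
    then show ?thesis using n o(2) unfolding Os_def by (intro bexI[of _ "(x (n - 1), x (n + int (length v)))"]) auto
  qed
  obtain c1 c2 where c: "c1 \<in> ext_left (image_shift \<sigma> X) u" "c2 \<in> ext_left (image_shift \<sigma> X) u" "c1 \<noteq> c2"
    using bs card2D unfolding bispecial_def by metis
  obtain d1 d2 where d: "d1 \<in> ext_right (image_shift \<sigma> X) u" "d2 \<in> ext_right (image_shift \<sigma> X) u" "d1 \<noteq> d2"
    using bs card2D unfolding bispecial_def by metis
  obtain e1 e2 e3 e4 where es: "e1 \<in> Os" "e2 \<in> Os" "?f e1 \<noteq> ?f e2" "e3 \<in> Os" "e4 \<in> Os" "?g e3 \<noteq> ?g e4"
    using OL[OF c(1)] OL[OF c(2)] OR[OF d(1)] OR[OF d(2)] c(3) d(3) by metis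
  obtain e e' where ee: "e \<in> Os" "e' \<in> Os" "?f e \<noteq> ?f e'" "?g e \<noteq> ?g e'"
    using cross[OF es] by blast
  obtain a1 b1 a2 b2 where ab: "e = (a1, b1)" "e' = (a2, b2)" by fastforce
  have "sfx \<sigma> a1 a2 = s" using lcs_eq[of s \<sigma> a1 a2] ee ab unfolding Os_def by auto
  moreover have "pfx \<sigma> b1 b2 = p" using lcp_eq[of p \<sigma> b1 b2 l] ee ab unfolding Os_def by auto
  moreover have "a1 \<noteq> a2" "b1 \<noteq> b2" using ee ab by auto
  ultimately show ?thesis using ee ab sp(5) unfolding Os_def by auto
qed


lemma backward:
  fixes \<sigma> :: "'a \<Rightarrow> 'b::finite list"
  assumes slp: "strongly_left_proper \<sigma> l" and inj: "inj (morph \<sigma>)" and v: "v \<in> lang X"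
    and e1: "(a1, b1) \<in> ext_both X v" and e2: "(a2, b2) \<in> ext_both X v"
    and ne: "a1 \<noteq> a2" "b1 \<noteq> b2"
    and u: "u = sfx \<sigma> a1 a2 @ morph \<sigma> v @ pfx \<sigma> b1 b2"
  shows "bispecial (image_shift \<sigma> X) u \<and> extended_image \<sigma> X u v"
proof -
  define s where "s = sfx \<sigma> a1 a2"
  define p where "p = pfx \<sigma> b1 b2"
  obtain r1 r2 where r: "rev (\<sigma> a1) = rev s @ r1" "rev (\<sigma> a2) = rev s @ r2" "r1 = [] \<or> r2 = [] \<or> hd r1 \<noteq> hd r2"
    using lcp_split[of "rev (\<sigma> a1)" "rev (\<sigma> a2)"] unfolding s_def sfx_def lcs_def by auto
  have a1s: "\<sigma> a1 = rev r1 @ s" and a2s: "\<sigma> a2 = rev r2 @ s" using r(1,2) by (metis rev_append rev_rev_ident)+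
  have r1ne: "r1 \<noteq> []"
  proof
    assume "r1 = []"
    then have "\<sigma> a2 = rev r2 @ \<sigma> a1" using a1s a2s by simp
    then have "rev r2 = []" using suffix_eq[OF slp] by blast
    then show False using a1s a2s \<open>r1 = []\<close> ne(1) inj_letters[OF inj] by auto
  qed
  have r2ne: "r2 \<noteq> []"
  proof
    assume "r2 = []"
    then have "\<sigma> a1 = rev r1 @ \<sigma> a2" using a1s a2s by simp
    then have "rev r1 = []" using suffix_eq[OF slp] by blast
    then show False using r1ne by simp
  qed
  have ss1: "strict_suffix s (\<sigma> a1)" and ss2: "strict_suffix s (\<sigma> a2)"
    unfolding strict_suffix_def suffix_def using a1s a2s r1ne r2ne by auto
  have L1: "Lt \<sigma> s a1 = hd r1" unfolding Lt_def a1s using r1ne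
    by (simp add: nth_append hd_conv_nth rev_nth)
  have L2: "Lt \<sigma> s a2 = hd r2" unfolding Lt_def a2s using r2ne
    by (simp add: nth_append hd_conv_nth rev_nth)
  have Ld: "Lt \<sigma> s a1 \<noteq> Lt \<sigma> s a2" using L1 L2 r(3) r1ne r2ne by auto
  obtain q1 q2 where q: "\<sigma> b1 = p @ q1" "\<sigma> b2 = p @ q2" "q1 = [] \<or> q2 = [] \<or> hd q1 \<noteq> hd q2"
    using lcp_split[of "\<sigma> b1" "\<sigma> b2"] unfolding p_def pfx_def by auto
  have pne: "p \<noteq> []"
  proof
    assume "p = []"
    then have "q1 = \<sigma> b1" "q2 = \<sigma> b2" using q by auto
    then show False using q(3) slp_ne[OF slp] slp_0[OF slp] by (metis hd_conv_nth)
  qed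
  have pre1: "prefix p (\<sigma> b1)" and pre2: "prefix p (\<sigma> b2)" using q by auto
  have R1: "Rt \<sigma> l p b1 = (if q1 = [] then l else hd q1)" unfolding Rt_def q by (auto simp: hd_conv_nth nth_append)
  have R2: "Rt \<sigma> l p b2 = (if q2 = [] then l else hd q2)" unfolding Rt_def q by (auto simp: hd_conv_nth nth_append)
  have hdq: "hd q \<noteq> l" if "\<sigma> b = p @ q" "q \<noteq> []" for b q
  proof -
    have "\<sigma> b ! length p = hd q" using that by (simp add: nth_append hd_conv_nth)
    moreover have "length p < length (\<sigma> b)" "length p \<noteq> 0" using that pne by auto
    ultimately show ?thesis using slp_nl[OF slp] by metis
  qed
  have Rd: "Rt \<sigma> l p b1 \<noteq> Rt \<sigma> l p b2"
  proof -
    have "\<not> (q1 = [] \<and> q2 = [])" using q(1,2) ne(2) inj_letters[OF inj] by auto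
    then show ?thesis using R1 R2 q(3) hdq[OF q(1)] hdq[OF q(2)] by auto
  qed
  have u': "u = s @ morph \<sigma> v @ p" using u s_def p_def by simp
  have l1: "Lt \<sigma> s a1 \<in> ext_left (image_shift \<sigma> X) u" "Lt \<sigma> s a2 \<in> ext_left (image_shift \<sigma> X) u"
    using ctx_lang(1)[OF slp e1 ss1 pre1] ctx_lang(1)[OF slp e2 ss2 pre2] u' unfolding ext_left_def by auto
  have r1': "Rt \<sigma> l p b1 \<in> ext_right (image_shift \<sigma> X) u" "Rt \<sigma> l p b2 \<in> ext_right (image_shift \<sigma> X) u"
    using ctx_lang(2)[OF slp e1 ss1 pre1] ctx_lang(2)[OF slp e2 ss2 pre2] u' unfolding ext_right_def by auto
  have ul: "u \<in> lang (image_shift \<sigma> X)" using l1(1) unfolding ext_left_def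
    using lang_infix[of "[Lt \<sigma> s a1]" u "[]"] by simp
  have "bispecial (image_shift \<sigma> X) u" unfolding bispecial_def
    using ul card2[OF finite, OF l1 Ld] card2[OF finite, OF r1' Rd] by blast
  moreover have "extended_image \<sigma> X u v" unfolding extended_image_def
    using v e1 ss1 pne pre1 u' by blast
  ultimately show ?thesis ..
qed


theorem corollary4p2:
  fixes X :: "(int \<Rightarrow> 'a::finite) set" and \<sigma> :: "'a \<Rightarrow> 'b::finite list"
    and l :: 'b and v :: "'a list"
  assumes "shift_space X"
    and "inj (morph \<sigma>)"
    and "strongly_left_proper \<sigma> l"
    and "v \<in> lang X"
  shows "(\<forall>u. (bispecial (image_shift \<sigma> X) u \<and> extended_image \<sigma> X u v) \<longleftrightarrow>
            (\<exists>a1 b1 a2 b2. (a1, b1) \<in> ext_both X v \<and> (a2, b2) \<in> ext_both X v \<and>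
               a1 \<noteq> a2 \<and> b1 \<noteq> b2 \<and> u = sfx \<sigma> a1 a2 @ morph \<sigma> v @ pfx \<sigma> b1 b2))
      \<and> (\<forall>u. bispecial (image_shift \<sigma> X) u \<and> extended_image \<sigma> X u v \<longrightarrow> bispecial X v)"
proof (intro conjI allI impI; (rule iffI)?)
  fix u
  assume "bispecial (image_shift \<sigma> X) u \<and> extended_image \<sigma> X u v"
  then show "\<exists>a1 b1 a2 b2. (a1, b1) \<in> ext_both X v \<and> (a2, b2) \<in> ext_both X v \<and>
               a1 \<noteq> a2 \<and> b1 \<noteq> b2 \<and> u = sfx \<sigma> a1 a2 @ morph \<sigma> v @ pfx \<sigma> b1 b2"
    using forward[OF assms(3) assms(2)] by blast
next
  fix u
  assume "\<exists>a1 b1 a2 b2. (a1, b1) \<in> ext_both X v \<and> (a2, b2) \<in> ext_both X v \<and>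
               a1 \<noteq> a2 \<and> b1 \<noteq> b2 \<and> u = sfx \<sigma> a1 a2 @ morph \<sigma> v @ pfx \<sigma> b1 b2"
  then show "bispecial (image_shift \<sigma> X) u \<and> extended_image \<sigma> X u v"
    using backward[OF assms(3) assms(2) assms(4)] by blast
next
  fix u
  assume "bispecial (image_shift \<sigma> X) u \<and> extended_image \<sigma> X u v"
  then obtain a1 b1 a2 b2 where ab: "(a1, b1) \<in> ext_both X v" "(a2, b2) \<in> ext_both X v" "a1 \<noteq> a2" "b1 \<noteq> b2"
    using forward[OF assms(3) assms(2)] by blast
  have "a1 \<in> ext_left X v" "a2 \<in> ext_left X v"
    using ab(1,2) lang_infix[of "[]" "_ # v" "[_]"] unfolding ext_both_def ext_left_def by auto
  moreover have "b1 \<in> ext_right X v" "b2 \<in> ext_right X v"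
    using ab(1,2) lang_infix[of "[_]" "v @ [_]" "[]"] unfolding ext_both_def ext_right_def by auto
  ultimately show "bispecial X v" unfolding bispecial_def
    using assms(4) card2[OF finite] ab(3,4) by blast
qed

end
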